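(* Let $\mathcal I'$ be an SMI instance and $a$ an agent of $\mathcal I'$. Then there is at most one agent $a'$ with $a'\notin \mathrm{ma}(\mathcal I')$ and $a'\in\mathrm{ma}(\mathcal I'\setminus\{a\})$.
   Context: In a Stable Marriage with Incomplete Lists (SMI) instance there are men $U$ and women $W$, and each agent has a strict preference list over a subset of the agents of opposite gender; $m,w$ are mutually acceptable if each appears in the other's list. A matching is a set of mutually acceptable man–woman pairs in which each agent appears at most once. A mutually acceptable pair $\{m,w\}$ blocks a matching $M$ if ($m$ is unassigned or prefers $w$ to his partner) and ($w$ is unassigned or prefers $m$ to her partner); $M$ is stable if no pair blocks it. By the Rural Hospitals Theorem all stable matchings of an SMI instance assign the same set of agents; $\mathrm{ma}(\mathcal I)$ denotes this set of agents matched in the stable matchings of $\mathcal I$. $\mathcal I'\setminus\{a\}$ is the SMI instance obtained by deleting agent $a$ (and removing it from all lists). *)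

theory Defs
  imports Main
begin

text \<open>An SMI instance is given by a set of men U, a set of women W and
preference lists P :: agent \<Rightarrow> agent list (strict preferences = distinct lists;
earlier in the list = more preferred).\<close>

definition smi :: "'a set \<Rightarrow> 'a set \<Rightarrow> ('a \<Rightarrow> 'a list) \<Rightarrow> bool" where
  "smi U W P \<longleftrightarrow> finite U \<and> finite W \<and> U \<inter> W = {} \<and>
     (\<forall>m\<in>U. distinct (P m) \<and> set (P m) \<subseteq> W) \<and>
     (\<forall>w\<in>W. distinct (P w) \<and> set (P w) \<subseteq> U)"

definition acceptable :: "('a \<Rightarrow> 'a list) \<Rightarrow> 'a \<Rightarrow> 'a \<Rightarrow> bool" where
  "acceptable P m w \<longleftrightarrow> w \<in> set (P m) \<and> m \<in> set (P w)"

definition prefers :: "('a \<Rightarrow> 'a list) \<Rightarrow> 'a \<Rightarrow> 'a \<Rightarrow> 'a \<Rightarrow> bool" where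
  "prefers P x y z \<longleftrightarrow> (\<exists>i j. i < j \<and> j < length (P x) \<and> P x ! i = y \<and> P x ! j = z)"

definition matching :: "'a set \<Rightarrow> 'a set \<Rightarrow> ('a \<Rightarrow> 'a list) \<Rightarrow> ('a \<times> 'a) set \<Rightarrow> bool" where
  "matching U W P M \<longleftrightarrow>
     (\<forall>(m, w)\<in>M. m \<in> U \<and> w \<in> W \<and> acceptable P m w) \<and>
     (\<forall>m w w'. (m, w) \<in> M \<longrightarrow> (m, w') \<in> M \<longrightarrow> w = w') \<and>
     (\<forall>m m' w. (m, w) \<in> M \<longrightarrow> (m', w) \<in> M \<longrightarrow> m = m')"

definition blocks :: "'a set \<Rightarrow> 'a set \<Rightarrow> ('a \<Rightarrow> 'a list) \<Rightarrow> ('a \<times> 'a) set \<Rightarrow> 'a \<Rightarrow> 'a \<Rightarrow> bool" where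
  "blocks U W P M m w \<longleftrightarrow> m \<in> U \<and> w \<in> W \<and> acceptable P m w \<and>
     ((\<forall>w'. (m, w') \<notin> M) \<or> (\<exists>w'. (m, w') \<in> M \<and> prefers P m w w')) \<and>
     ((\<forall>m'. (m', w) \<notin> M) \<or> (\<exists>m'. (m', w) \<in> M \<and> prefers P w m m'))"

definition stable :: "'a set \<Rightarrow> 'a set \<Rightarrow> ('a \<Rightarrow> 'a list) \<Rightarrow> ('a \<times> 'a) set \<Rightarrow> bool" where
  "stable U W P M \<longleftrightarrow> matching U W P M \<and> (\<forall>m w. \<not> blocks U W P M m w)"

text \<open>Agents matched in the stable matchings (by the Rural Hospitals Theorem this is
the set matched in any single stable matching).\<close>
definition ma :: "'a set \<Rightarrow> 'a set \<Rightarrow> ('a \<Rightarrow> 'a list) \<Rightarrow> 'a set" where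
  "ma U W P = {x. \<exists>M. stable U W P M \<and> (\<exists>y. (x, y) \<in> M \<or> (y, x) \<in> M)}"

definition del_pref :: "'a \<Rightarrow> ('a \<Rightarrow> 'a list) \<Rightarrow> ('a \<Rightarrow> 'a list)" where
  "del_pref a P = (\<lambda>x. filter (\<lambda>y. y \<noteq> a) (P x))"

end

theory Submission imports Defs begin


lemma pref_split: "prefers P x y z \<longleftrightarrow> (\<exists>as bs. P x = as @ y # bs \<and> z \<in> set bs)"
proof
  assume "prefers P x y z"
  then obtain i j where ij: "i < j" "j < length (P x)" "P x ! i = y" "P x ! j = z"
    unfolding prefers_def by blast
  have il: "i < length (P x)" using ij by simp
  have "P x = take i (P x) @ P x ! i # drop (Suc i) (P x)"
    using il by (rule id_take_nth_drop)
  moreover have "drop (Suc i) (P x) ! (j - Suc i) = z" using ij by simp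
  moreover have "j - Suc i < length (drop (Suc i) (P x))" using ij by simp
  ultimately show "\<exists>as bs. P x = as @ y # bs \<and> z \<in> set bs" using ij nth_mem by metis
next
  assume "\<exists>as bs. P x = as @ y # bs \<and> z \<in> set bs"
  then obtain as bs where h: "P x = as @ y # bs" "z \<in> set bs" by blast
  then obtain k where k: "k < length bs" "bs ! k = z" by (metis in_set_conv_nth)
  have "P x ! length as = y" using h by simp
  moreover have "P x ! (length as + Suc k) = z" using h k by (simp add: nth_append)
  moreover have "length as + Suc k < length (P x)" using h k by simp
  moreover have "length as < length as + Suc k" by simp
  ultimately show "prefers P x y z" unfolding prefers_def by blast
qed

lemma pref_set: "prefers P x y z \<Longrightarrow> y \<in> set (P x) \<and> z \<in> set (P x)"
  unfolding prefers_def by auto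

lemma pref_total: "y \<in> set (P x) \<Longrightarrow> z \<in> set (P x) \<Longrightarrow> y \<noteq> z \<Longrightarrow> prefers P x y z \<or> prefers P x z y"
proof -
  assume a: "y \<in> set (P x)" "z \<in> set (P x)" "y \<noteq> z"
  then obtain i j where "i < length (P x)" "P x ! i = y" "j < length (P x)" "P x ! j = z"
    by (metis in_set_conv_nth)
  then show ?thesis unfolding prefers_def using a(3)
    by (metis linorder_neqE_nat)
qed

lemma pref_asym: "distinct (P x) \<Longrightarrow> prefers P x y z \<Longrightarrow> \<not> prefers P x z y"
proof
  assume d: "distinct (P x)" and "prefers P x y z" "prefers P x z y"
  then obtain i j i' j' where h: "i < j" "j < length (P x)" "P x ! i = y" "P x ! j = z"
     "i' < j'" "j' < length (P x)" "P x ! i' = z" "P x ! j' = y"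
    unfolding prefers_def by blast
  have "i = j'" using d h nth_eq_iff_index_eq by (metis order.strict_trans)
  moreover have "j = i'" using d h nth_eq_iff_index_eq by (metis order.strict_trans)
  ultimately show False using h by simp
qed

lemma pref_irrefl: "distinct (P x) \<Longrightarrow> \<not> prefers P x y y"
  by (metis pref_asym)

lemma pref_del: "prefers P x y z \<Longrightarrow> y \<noteq> a \<Longrightarrow> z \<noteq> a \<Longrightarrow> prefers (del_pref a P) x y z"
proof -
  assume h: "prefers P x y z" "y \<noteq> a" "z \<noteq> a"
  then obtain as bs where s: "P x = as @ y # bs" "z \<in> set bs" using pref_split by metis
  have "del_pref a P x = filter (\<lambda>y. y \<noteq> a) as @ y # filter (\<lambda>y. y \<noteq> a) bs"
    using s h by (simp add: del_pref_def)
  moreover have "z \<in> set (filter (\<lambda>y. y \<noteq> a) bs)" using s h by simp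
  ultimately show ?thesis using pref_split by metis
qed

lemma acc_del: "acceptable (del_pref a P) m w \<longleftrightarrow> acceptable P m w \<and> m \<noteq> a \<and> w \<noteq> a"
  unfolding acceptable_def del_pref_def by auto

lemma best:
  assumes "y \<in> set (P x)" "Q y"
  shows "\<exists>b. b \<in> set (P x) \<and> Q b \<and> (\<forall>c. Q c \<and> c \<in> set (P x) \<and> c \<noteq> b \<longrightarrow> prefers P x b c)"
proof -
  have "\<exists>i. i < length (P x) \<and> Q (P x ! i)" using assms by (metis in_set_conv_nth)
  then obtain i where i: "i < length (P x)" "Q (P x ! i)" "\<forall>j<i. \<not> (j < length (P x) \<and> Q (P x ! j))"
    using exists_least_iff[of "\<lambda>i. i < length (P x) \<and> Q (P x ! i)"] by blast
  show ?thesis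
  proof (intro exI conjI allI impI)
    show "P x ! i \<in> set (P x)" using i by simp
    show "Q (P x ! i)" using i by simp
    fix c assume c: "Q c \<and> c \<in> set (P x) \<and> c \<noteq> P x ! i"
    then obtain j where j: "j < length (P x)" "P x ! j = c" by (metis in_set_conv_nth)
    then have "i < j" using i c by (metis linorder_neqE_nat)
    then show "prefers P x (P x ! i) c" unfolding prefers_def using j by blast
  qed
qed

lemma smi_del: "smi U W P \<Longrightarrow> smi (U - {a}) (W - {a}) (del_pref a P)"
  unfolding smi_def del_pref_def by auto

lemma del_del: "del_pref a (del_pref a P) = del_pref a P"
  unfolding del_pref_def by (simp add: conj_absorb)

lemma acc_sym: "acceptable P m w = acceptable P w m"
  unfolding acceptable_def by blast

lemma matching_swap: "matching W U P (converse M) \<longleftrightarrow> matching U W P M"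
  unfolding matching_def acceptable_def by auto

lemma blocks_swap: "blocks W U P (converse M) w m \<longleftrightarrow> blocks U W P M m w"
  unfolding blocks_def acceptable_def by blast

lemma stable_swap: "stable W U P (converse M) \<longleftrightarrow> stable U W P M"
  unfolding stable_def using matching_swap blocks_swap by metis



lemma stable_exists:
  assumes smi: "smi U W P"
  shows "\<exists>M. stable U W P M"
proof -
  define E where "E = {(m, w). m \<in> U \<and> w \<in> W \<and> acceptable P m w}"
  define RU where "RU = (\<lambda>X. {(m, w). (m, w) \<in> X \<and> (\<exists>w'. (m, w') \<in> X \<and> prefers P m w' w)})"
  define RW where "RW = (\<lambda>X. {(m, w). (m, w) \<in> X \<and> (\<exists>m'. (m', w) \<in> X \<and> prefers P w m' m)})"
  define f where "f = (\<lambda>X. E - RW (E - RU X))"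
  have monoRU: "RU X \<subseteq> RU Y" if "X \<subseteq> Y" for X Y using that unfolding RU_def by blast
  have monoRW: "RW X \<subseteq> RW Y" if "X \<subseteq> Y" for X Y using that unfolding RW_def by blast
  have "mono f" unfolding mono_def f_def
  proof (intro allI impI)
    fix X Y :: "('a \<times> 'a) set" assume "X \<le> Y"
    then have "E - RU Y \<subseteq> E - RU X" using monoRU by blast
    then have "RW (E - RU Y) \<subseteq> RW (E - RU X)" using monoRW by blast
    then show "E - RW (E - RU X) \<le> E - RW (E - RU Y)" by blast
  qed
  define X where "X = lfp f"
  have X: "X = E - RW (E - RU X)" unfolding X_def using lfp_unfold[OF \<open>mono f\<close>] f_def by metis
  define Y where "Y = E - RU X"
  define M where "M = X \<inter> Y"
  have XE: "X \<subseteq> E" using X by blast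
  have YE: "Y \<subseteq> E" unfolding Y_def by blast
  have XY: "E \<subseteq> X \<union> Y" using X unfolding Y_def RW_def by blast
  have M1: "M = X - RU X" unfolding M_def Y_def using XE by blast
  have M2: "M = Y - RW Y" unfolding M_def using X YE Y_def by blast
  have dU: "distinct (P m)" if "m \<in> U" for m using smi that unfolding smi_def by blast
  have dW: "distinct (P w)" if "w \<in> W" for w using smi that unfolding smi_def by blast
  have Eacc: "m \<in> U \<and> w \<in> W \<and> w \<in> set (P m) \<and> m \<in> set (P w)" if "(m, w) \<in> E" for m w
    using that unfolding E_def acceptable_def by blast
  have bestU: "\<exists>w0. (m, w0) \<in> M \<and> (w0 = w \<or> prefers P m w0 w)" if "(m, w) \<in> X" for m w
  proof -
    have "w \<in> set (P m)" using that XE Eacc by blast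
    from best[where y=w and P=P and x=m and Q="\<lambda>w'. (m, w') \<in> X", OF this] that obtain b where
      b: "b \<in> set (P m)" "(m, b) \<in> X" "\<forall>c. (m, c) \<in> X \<and> c \<in> set (P m) \<and> c \<noteq> b \<longrightarrow> prefers P m b c"
      by blast
    have "m \<in> U" using that XE Eacc by blast
    have "(m, b) \<notin> RU X"
    proof
      assume "(m, b) \<in> RU X"
      then obtain w' where w': "(m, w') \<in> X" "prefers P m w' b" unfolding RU_def by blast
      then have "w' \<noteq> b" using pref_irrefl dU \<open>m \<in> U\<close> by metis
      then have "prefers P m b w'" using b w' pref_set by metis
      then show False using w' pref_asym dU \<open>m \<in> U\<close> by metis
    qed
    then have "(m, b) \<in> M" using M1 b by blast
    then show ?thesis using b that \<open>w \<in> set (P m)\<close> by blast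
  qed
  have bestW: "\<exists>m0. (m0, w) \<in> M \<and> (m0 = m \<or> prefers P w m0 m)" if "(m, w) \<in> Y" for m w
  proof -
    have "m \<in> set (P w)" using that YE Eacc by blast
    from best[where y=m and P=P and x=w and Q="\<lambda>m'. (m', w) \<in> Y", OF this] that obtain b where
      b: "b \<in> set (P w)" "(b, w) \<in> Y" "\<forall>c. (c, w) \<in> Y \<and> c \<in> set (P w) \<and> c \<noteq> b \<longrightarrow> prefers P w b c"
      by blast
    have "w \<in> W" using that YE Eacc by blast
    have "(b, w) \<notin> RW Y"
    proof
      assume "(b, w) \<in> RW Y"
      then obtain m' where m': "(m', w) \<in> Y" "prefers P w m' b" unfolding RW_def by blast
      then have "m' \<noteq> b" using pref_irrefl dW \<open>w \<in> W\<close> by metis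
      then have "prefers P w b m'" using b m' pref_set by metis
      then show False using m' pref_asym dW \<open>w \<in> W\<close> by metis
    qed
    then have "(b, w) \<in> M" using M2 b by blast
    then show ?thesis using b that \<open>m \<in> set (P w)\<close> by blast
  qed
  have uniqU: "w = w'" if "(m, w) \<in> M" "(m, w') \<in> M" for m w w'
  proof (rule ccontr)
    assume "w \<noteq> w'"
    have "w \<in> set (P m)" "w' \<in> set (P m)" using that M_def XE Eacc by blast+
    then have "prefers P m w w' \<or> prefers P m w' w" using pref_total \<open>w \<noteq> w'\<close> by metis
    then have "(m, w) \<in> RU X \<or> (m, w') \<in> RU X" using that M_def unfolding RU_def by blast
    then show False using that M1 by blast
  qed
  have uniqW: "m = m'" if "(m, w) \<in> M" "(m', w) \<in> M" for m m' w
  proof (rule ccontr)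
    assume "m \<noteq> m'"
    have "m \<in> set (P w)" "m' \<in> set (P w)" using that M_def YE Eacc by blast+
    then have "prefers P w m m' \<or> prefers P w m' m" using pref_total \<open>m \<noteq> m'\<close> by metis
    then have "(m, w) \<in> RW Y \<or> (m', w) \<in> RW Y" using that M_def unfolding RW_def by blast
    then show False using that M2 by blast
  qed
  have "matching U W P M"
    unfolding matching_def using uniqU uniqW M_def XE unfolding E_def by blast
  moreover have "\<not> blocks U W P M m w" for m w
  proof
    assume bl: "blocks U W P M m w"
    then have "(m, w) \<in> E" unfolding blocks_def E_def by blast
    have mU: "m \<in> U" "w \<in> W" using bl unfolding blocks_def by auto
    have notin: "(m, w) \<notin> M"
    proof
      assume "(m, w) \<in> M"
      then have "\<exists>w'. (m, w') \<in> M \<and> prefers P m w w'" using bl unfolding blocks_def by blast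
      then show False using uniqU \<open>(m, w) \<in> M\<close> pref_irrefl dU mU by metis
    qed
    show False
    proof (cases "(m, w) \<in> X")
      case True
      then obtain w0 where w0: "(m, w0) \<in> M" "w0 = w \<or> prefers P m w0 w" using bestU by blast
      then have "prefers P m w0 w" using notin by blast
      moreover have "\<exists>w'. (m, w') \<in> M \<and> prefers P m w w'" using bl w0 unfolding blocks_def by blast
      ultimately show False using uniqU w0 pref_asym dU mU by metis
    next
      case False
      then have "(m, w) \<in> Y" using XY \<open>(m, w) \<in> E\<close> by blast
      then obtain m0 where m0: "(m0, w) \<in> M" "m0 = m \<or> prefers P w m0 m" using bestW by blast
      then have "prefers P w m0 m" using notin by blast
      moreover have "\<exists>m'. (m', w) \<in> M \<and> prefers P w m m'" using bl m0 unfolding blocks_def by blast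
      ultimately show False using uniqW m0 pref_asym dW mU by metis
    qed
  qed
  ultimately show ?thesis unfolding stable_def by blast
qed



lemma countL:
  assumes smi: "smi U W P"
    and st: "stable U W P M"
    and st': "stable (U - {a}) (W - {a}) (del_pref a P) M'"
  defines "SU \<equiv> {m. \<exists>w'. (m, w') \<in> M' \<and> (\<forall>w. (m, w) \<in> M \<longrightarrow> prefers P m w' w)}"
    and "SW \<equiv> {w. \<exists>m. (m, w) \<in> M \<and> (\<forall>m'. (m', w) \<in> M' \<longrightarrow> prefers P w m m')}"
    and "E \<equiv> {w. w = a \<or> (a, w) \<in> M}"
  shows "card (SU - Domain M) + card (SW - Range M') \<le> card (SW \<inter> E)"
proof -
  have fin: "finite U" "finite W" using smi unfolding smi_def by auto
  have dU: "distinct (P m)" if "m \<in> U" for m using smi that unfolding smi_def by blast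
  have dW: "distinct (P w)" if "w \<in> W" for w using smi that unfolding smi_def by blast
  have Mm: "matching U W P M" and Mnb: "\<And>m w. \<not> blocks U W P M m w" using st unfolding stable_def by auto
  have M'm: "matching (U - {a}) (W - {a}) (del_pref a P) M'"
    and M'nb: "\<And>m w. \<not> blocks (U - {a}) (W - {a}) (del_pref a P) M' m w"
    using st' unfolding stable_def by auto
  have Mac: "m \<in> U \<and> w \<in> W \<and> acceptable P m w" if "(m, w) \<in> M" for m w
    using Mm that unfolding matching_def by blast
  have M'ac: "m \<in> U - {a} \<and> w \<in> W - {a} \<and> acceptable P m w" if "(m, w) \<in> M'" for m w
    using M'm that acc_del unfolding matching_def by fast
  have Mu1: "w = w'" if "(m, w) \<in> M" "(m, w') \<in> M" for m w w' using Mm that unfolding matching_def by blast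
  have Mu2: "m = m'" if "(m, w) \<in> M" "(m', w) \<in> M" for m m' w using Mm that unfolding matching_def by blast
  have M'u1: "w = w'" if "(m, w) \<in> M'" "(m, w') \<in> M'" for m w w' using M'm that unfolding matching_def by blast
  have M'u2: "m = m'" if "(m, w) \<in> M'" "(m', w) \<in> M'" for m m' w using M'm that unfolding matching_def by blast
  have SUU: "SU \<subseteq> U" unfolding SU_def using M'ac by blast
  have SWW: "SW \<subseteq> W" unfolding SW_def using Mac by blast
  have finSU: "finite SU" using SUU fin finite_subset by blast
  have finSW: "finite SW" using SWW fin finite_subset by blast
  define f where "f = (\<lambda>m. THE w. (m, w) \<in> M')"
  have f: "f m = w" if "(m, w) \<in> M'" for m w unfolding f_def using that M'u1 by blast
  define g where "g = (\<lambda>w. THE m. (m, w) \<in> M)"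
  have g: "g w = m" if "(m, w) \<in> M" for m w unfolding g_def using that Mu2 by blast
  have c1: "card SU \<le> card (SW \<inter> Range M')"
  proof (rule card_inj_on_le)
    show "inj_on f SU"
    proof
      fix m1 m2 assume "m1 \<in> SU" "m2 \<in> SU" "f m1 = f m2"
      then obtain w1 w2 where "(m1, w1) \<in> M'" "(m2, w2) \<in> M'" unfolding SU_def by blast
      then show "m1 = m2" using f \<open>f m1 = f m2\<close> M'u2 by metis
    qed
    show "finite (SW \<inter> Range M')" using finSW by blast
    show "f ` SU \<subseteq> SW \<inter> Range M'"
    proof
      fix w' assume "w' \<in> f ` SU"
      then obtain m where m: "m \<in> SU" "w' = f m" by blast
      then obtain w1 where w1: "(m, w1) \<in> M'" "\<forall>w. (m, w) \<in> M \<longrightarrow> prefers P m w1 w" unfolding SU_def by blast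
      then have "w' = w1" using f m by metis
      have acc: "m \<in> U" "w' \<in> W" "acceptable P m w'" using M'ac w1 \<open>w' = w1\<close> by auto
      have c1: "(\<forall>w. (m, w) \<notin> M) \<or> (\<exists>w. (m, w) \<in> M \<and> prefers P m w' w)" using w1 \<open>w' = w1\<close> by blast
      from Mnb[of m w'] acc c1 obtain m0 where m0: "(m0, w') \<in> M" "\<not> prefers P w' m m0"
        unfolding blocks_def by blast
      have "m0 \<noteq> m"
      proof
        assume "m0 = m"
        then have "prefers P m w' w'" using w1 m0 \<open>w' = w1\<close> by blast
        then show False using pref_irrefl dU acc by metis
      qed
      moreover have "m0 \<in> set (P w')" "m \<in> set (P w')" using Mac m0 acc unfolding acceptable_def by auto
      ultimately have "prefers P w' m0 m" using pref_total m0 by metis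
      then have "w' \<in> SW" unfolding SW_def using m0 M'u2 w1 \<open>w' = w1\<close> by blast
      then show "w' \<in> SW \<inter> Range M'" using w1 \<open>w' = w1\<close> by blast
    qed
  qed
  have c2: "card (SW - E) \<le> card (SU \<inter> Domain M)"
  proof (rule card_inj_on_le)
    show "inj_on g (SW - E)"
    proof
      fix w1 w2 assume "w1 \<in> SW - E" "w2 \<in> SW - E" "g w1 = g w2"
      then obtain m1 m2 where "(m1, w1) \<in> M" "(m2, w2) \<in> M" unfolding SW_def by blast
      then show "w1 = w2" using g \<open>g w1 = g w2\<close> Mu1 by metis
    qed
    show "finite (SU \<inter> Domain M)" using finSU by blast
    show "g ` (SW - E) \<subseteq> SU \<inter> Domain M"
    proof
      fix m assume "m \<in> g ` (SW - E)"
      then obtain w where w: "w \<in> SW - E" "m = g w" by blast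
      then obtain m1 where m1: "(m1, w) \<in> M" "\<forall>m'. (m', w) \<in> M' \<longrightarrow> prefers P w m1 m'" unfolding SW_def by blast
      then have "m = m1" using g w by metis
      have "w \<noteq> a" "m \<noteq> a" using w m1 \<open>m = m1\<close> unfolding E_def by auto
      have acc: "m \<in> U - {a}" "w \<in> W - {a}" "acceptable (del_pref a P) m w"
        using Mac[OF m1(1)] \<open>m = m1\<close> \<open>w \<noteq> a\<close> \<open>m \<noteq> a\<close> by (auto simp: acc_del)
      have cw: "(\<forall>m'. (m', w) \<notin> M') \<or> (\<exists>m'. (m', w) \<in> M' \<and> prefers (del_pref a P) w m m')"
      proof (cases "\<exists>m'. (m', w) \<in> M'")
        case True
        then obtain m' where "(m', w) \<in> M'" by blast
        then have "prefers P w m m'" "m' \<noteq> a" using m1 \<open>m = m1\<close> M'ac by auto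
        then show ?thesis using pref_del \<open>m \<noteq> a\<close> \<open>(m', w) \<in> M'\<close> by metis
      qed blast
      from M'nb[of m w] acc cw obtain w'' where w'': "(m, w'') \<in> M'" "\<not> prefers (del_pref a P) m w w''"
        unfolding blocks_def by blast
      have "w'' \<noteq> w"
      proof
        assume "w'' = w"
        then have "prefers P w m m" using m1 w'' \<open>m = m1\<close> by blast
        then show False using pref_irrefl dW acc by (metis DiffD1)
      qed
      moreover have "w'' \<in> set (P m)" "w \<in> set (P m)" "w'' \<noteq> a"
        using M'ac w'' Mac m1 \<open>m = m1\<close> unfolding acceptable_def by auto
      ultimately have "prefers P m w'' w \<or> prefers P m w w''" using pref_total by metis
      then have "prefers P m w'' w" using pref_del w'' \<open>w \<noteq> a\<close> \<open>w'' \<noteq> a\<close> by metis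
      then have "m \<in> SU" unfolding SU_def using w'' Mu1 m1 \<open>m = m1\<close> by blast
      then show "m \<in> SU \<inter> Domain M" using m1 \<open>m = m1\<close> by blast
    qed
  qed
  have e1: "card SW = card (SW \<inter> Range M') + card (SW - Range M')" using card_Int_Diff finSW by blast
  have e2: "card SU = card (SU \<inter> Domain M) + card (SU - Domain M)" using card_Int_Diff finSU by blast
  have e3: "card SW = card (SW \<inter> E) + card (SW - E)" using card_Int_Diff finSW by blast
  show ?thesis using c1 c2 e1 e2 e3 by linarith
qed



lemma smi_swap: "smi W U P \<longleftrightarrow> smi U W P"
  unfolding smi_def by blast

lemma matched_sub: "stable U W P M \<Longrightarrow> Domain M \<subseteq> U \<and> Range M \<subseteq> W"
  unfolding stable_def matching_def by blast

lemma RH_dom: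
  assumes smi: "smi U W P"
    and s1: "stable (U - {a}) (W - {a}) (del_pref a P) M1"
    and s2: "stable (U - {a}) (W - {a}) (del_pref a P) M2"
    and z: "z \<in> Domain M2"
  shows "z \<in> Domain M1"
proof (rule ccontr)
  assume nz: "z \<notin> Domain M1"
  have s2': "stable (U - {a} - {a}) (W - {a} - {a}) (del_pref a (del_pref a P)) M2"
    using s2 by (simp add: del_del)
  define SU where "SU = {m. \<exists>w'. (m, w') \<in> M2 \<and> (\<forall>w. (m, w) \<in> M1 \<longrightarrow> prefers (del_pref a P) m w' w)}"
  define SW where "SW = {w. \<exists>m. (m, w) \<in> M1 \<and> (\<forall>m'. (m', w) \<in> M2 \<longrightarrow> prefers (del_pref a P) w m m')}"
  define E where "E = {w. w = a \<or> (a, w) \<in> M1}"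
  have h: "card (SU - Domain M1) + card (SW - Range M2) \<le> card (SW \<inter> E)"
    unfolding SU_def SW_def E_def by (rule countL[OF smi_del[OF smi] s1 s2'])
  have ms: "Domain M1 \<subseteq> U - {a}" "Range M1 \<subseteq> W - {a}" using matched_sub[OF s1] by auto
  have "SW \<inter> E = {}"
  proof -
    have "w \<notin> E" if ww: "w \<in> SW" for w
    proof -
      obtain m where "(m, w) \<in> M1" using ww SW_def by blast
      then have "w \<noteq> a" using ms by blast
      moreover have "(a, w) \<notin> M1" using ms by blast
      ultimately show ?thesis unfolding E_def by blast
    qed
    then show ?thesis by blast
  qed
  then have c0: "card (SU - Domain M1) = 0" using h by simp
  have "SU \<subseteq> Domain M2" unfolding SU_def by blast
  moreover have "Domain M2 \<subseteq> U" using matched_sub[OF s2] by blast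
  moreover have "finite U" using smi unfolding smi_def by blast
  ultimately have "finite (SU - Domain M1)" by (meson finite_Diff finite_subset)
  moreover have "z \<in> SU - Domain M1"
  proof -
    obtain w where "(z, w) \<in> M2" using z by blast
    then show ?thesis unfolding SU_def using nz by blast
  qed
  ultimately show False using c0 by (metis card_0_eq empty_iff)
qed

lemma RH_ran:
  assumes smi: "smi U W P"
    and s1: "stable (U - {a}) (W - {a}) (del_pref a P) M1"
    and s2: "stable (U - {a}) (W - {a}) (del_pref a P) M2"
    and z: "z \<in> Range M2"
  shows "z \<in> Range M1"
proof -
  have a: "smi W U P" using smi smi_swap by blast
  have b: "stable (W - {a}) (U - {a}) (del_pref a P) (converse M1)" using s1 stable_swap by blast
  have c: "stable (W - {a}) (U - {a}) (del_pref a P) (converse M2)" using s2 stable_swap by blast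
  have "z \<in> Domain (converse M2)" using z by simp
  then have "z \<in> Domain (converse M1)" using RH_dom[OF a b c] by blast
  then show ?thesis by simp
qed



theorem mainTheorem7:
  assumes "smi U W P" and "a \<in> U \<union> W"
  shows "\<forall>x y. x \<notin> ma U W P \<and> x \<in> ma (U - {a}) (W - {a}) (del_pref a P) \<and>
                y \<notin> ma U W P \<and> y \<in> ma (U - {a}) (W - {a}) (del_pref a P) \<longrightarrow> x = y"
proof (intro allI impI)
  fix x y
  assume H: "x \<notin> ma U W P \<and> x \<in> ma (U - {a}) (W - {a}) (del_pref a P) \<and>
                y \<notin> ma U W P \<and> y \<in> ma (U - {a}) (W - {a}) (del_pref a P)"
  have smi: "smi U W P" by fact
  obtain M0 where st0: "stable U W P M0" using stable_exists[OF smi] by blast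
  obtain M' where st': "stable (U - {a}) (W - {a}) (del_pref a P) M'" and xM': "x \<in> Domain M' \<or> x \<in> Range M'"
    using H unfolding ma_def by blast
  obtain My where stMy: "stable (U - {a}) (W - {a}) (del_pref a P) My" and yMy: "y \<in> Domain My \<or> y \<in> Range My"
    using H unfolding ma_def by blast
  have yM': "y \<in> Domain M' \<or> y \<in> Range M'"
    using yMy RH_dom[OF smi st' stMy] RH_ran[OF smi st' stMy] by blast
  have xM0: "x \<notin> Domain M0 \<and> x \<notin> Range M0" using H st0 unfolding ma_def by blast
  have yM0: "y \<notin> Domain M0 \<and> y \<notin> Range M0" using H st0 unfolding ma_def by blast
  have disj: "U \<inter> W = {}" and finU: "finite U" and finW: "finite W" using smi unfolding smi_def by auto
  have sub0: "Domain M0 \<subseteq> U" "Range M0 \<subseteq> W" using matched_sub[OF st0] by auto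
  have sub': "Domain M' \<subseteq> U - {a}" "Range M' \<subseteq> W - {a}" using matched_sub[OF st'] by auto
  define SU where "SU = {m. \<exists>w'. (m, w') \<in> M' \<and> (\<forall>w. (m, w) \<in> M0 \<longrightarrow> prefers P m w' w)}"
  define SW where "SW = {w. \<exists>m. (m, w) \<in> M0 \<and> (\<forall>m'. (m', w) \<in> M' \<longrightarrow> prefers P w m m')}"
  define E where "E = {w. w = a \<or> (a, w) \<in> M0}"
  define TW where "TW = {m. \<exists>w'. (m, w') \<in> converse M' \<and> (\<forall>w. (m, w) \<in> converse M0 \<longrightarrow> prefers P m w' w)}"
  define TU where "TU = {w. \<exists>m. (m, w) \<in> converse M0 \<and> (\<forall>m'. (m', w) \<in> converse M' \<longrightarrow> prefers P w m m')}"
  define E' where "E' = {w. w = a \<or> (a, w) \<in> converse M0}"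
  have h1: "card (SU - Domain M0) + card (SW - Range M') \<le> card (SW \<inter> E)"
    unfolding SU_def SW_def E_def by (rule countL[OF smi st0 st'])
  have st0s: "stable W U P (converse M0)" using st0 stable_swap by blast
  have st's: "stable (W - {a}) (U - {a}) (del_pref a P) (converse M')" using st' stable_swap by blast
  have h2: "card (TW - Domain (converse M0)) + card (TU - Range (converse M')) \<le> card (TU \<inter> E')"
    unfolding TW_def TU_def E'_def by (rule countL[OF smi_swap[THEN iffD2, OF smi] st0s st's])
  have SWsub: "SW \<subseteq> Range M0" unfolding SW_def by blast
  have TUsub: "TU \<subseteq> Domain M0" unfolding TU_def by blast
  have finTU: "finite TU" by (rule finite_subset[OF order_trans[OF TUsub sub0(1)] finU])
  have finSW: "finite SW" by (rule finite_subset[OF order_trans[OF SWsub sub0(2)] finW])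
  define A1 where "A1 = SU - Domain M0"
  define A2 where "A2 = TW - Domain (converse M0)"
  have bound: "card A1 + card A2 \<le> 1"
  proof (cases "\<exists>w0. (a, w0) \<in> M0")
    case True
    then obtain w0 where w0: "(a, w0) \<in> M0" by blast
    have aU: "a \<in> U" using w0 sub0 by blast
    have "SW \<inter> E \<subseteq> {w0}"
    proof
      fix w assume w: "w \<in> SW \<inter> E"
      then have "w \<in> W" using SWsub sub0 by blast
      then have "w \<noteq> a" using aU disj by blast
      then have "(a, w) \<in> M0" using w E_def by blast
      then show "w \<in> {w0}" using w0 st0 unfolding stable_def matching_def by blast
    qed
    then have c1: "card (SW \<inter> E) \<le> 1" using card_mono[of "{w0}"] by fastforce
    have "TU \<inter> E' \<subseteq> {a}" unfolding E'_def using sub0 aU disj by blast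
    then have c2: "card (TU \<inter> E') \<le> 1" using card_mono[of "{a}"] by fastforce
    have "a \<in> TU - Range (converse M')" unfolding TU_def using w0 sub' by blast
    moreover have "finite (TU - Range (converse M'))" using finTU by blast
    ultimately have "card (TU - Range (converse M')) \<ge> 1"
      by (metis One_nat_def Suc_leI card_gt_0_iff empty_iff)
    then show ?thesis using h1 h2 c1 c2 unfolding A1_def A2_def by linarith
  next
    case F1: False
    show ?thesis
    proof (cases "\<exists>m0. (m0, a) \<in> M0")
      case True
      then obtain m0 where m0: "(m0, a) \<in> M0" by blast
      have aW: "a \<in> W" using m0 sub0 by blast
      have "TU \<inter> E' \<subseteq> {m0}"
      proof
        fix m assume m: "m \<in> TU \<inter> E'"
        then have "m \<in> U" using TUsub sub0 by blast
        then have "m \<noteq> a" using aW disj by blast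
        then have "(m, a) \<in> M0" using m E'_def by blast
        then show "m \<in> {m0}" using m0 st0 unfolding stable_def matching_def by blast
      qed
      then have c2: "card (TU \<inter> E') \<le> 1" using card_mono[of "{m0}"] by fastforce
      have "SW \<inter> E \<subseteq> {a}" unfolding E_def using sub0 aW disj by blast
      then have c1: "card (SW \<inter> E) \<le> 1" using card_mono[of "{a}"] by fastforce
      have "a \<in> SW - Range M'" unfolding SW_def using m0 sub' by blast
      moreover have "finite (SW - Range M')" using finSW by blast
      ultimately have "card (SW - Range M') \<ge> 1"
        by (metis One_nat_def Suc_leI card_gt_0_iff empty_iff)
      then show ?thesis using h1 h2 c1 c2 unfolding A1_def A2_def by linarith
    next
      case False
      have "SW \<inter> E = {}" unfolding SW_def E_def using F1 False by blast
      moreover have "TU \<inter> E' = {}" unfolding TU_def E'_def using F1 False by blast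
      ultimately show ?thesis using h1 h2 unfolding A1_def A2_def by simp
    qed
  qed
  have inA: "z \<in> A1 \<union> A2" if "z \<in> Domain M' \<or> z \<in> Range M'" "z \<notin> Domain M0 \<and> z \<notin> Range M0" for z
    using that unfolding A1_def A2_def SU_def TW_def by blast
  have fin12: "finite (A1 \<union> A2)"
  proof (rule finite_subset)
    show "A1 \<union> A2 \<subseteq> U \<union> W" unfolding A1_def A2_def SU_def TW_def using sub' by blast
    show "finite (U \<union> W)" using finU finW by blast
  qed
  show "x = y"
  proof (rule ccontr)
    assume "x \<noteq> y"
    have "{x, y} \<subseteq> A1 \<union> A2" using inA[OF xM' xM0] inA[OF yM' yM0] by blast
    then have "card {x, y} \<le> card (A1 \<union> A2)" by (rule card_mono[OF fin12])
    moreover have "card {x, y} = 2" using \<open>x \<noteq> y\<close> by simp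
    moreover have "card (A1 \<union> A2) \<le> card A1 + card A2" by (rule card_Un_le)
    ultimately show False using bound by linarith
  qed
qed


end
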